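(* Let $G=(V,E)$ be a $k$-uniform cored hypergraph ($k\ge3$) and let $\mathbf x\in\mathbb R^n$ be an H-eigenvector of its Laplacian tensor $\mathcal L$ corresponding to an H-eigenvalue $\lambda\ge1$. For each $e\in E$ let $i_e\in e$ be a cored vertex. Then $\prod_{s\in e}x_s\le0$ for all $e\in E$ when $k$ is even, and $\prod_{s\in e\setminus\{i_e\}}x_s\le0$ for all $e\in E$ when $k$ is odd.
   Context: A $k$-uniform hypergraph $G=(V,E)$ has $V=[n]$ and a nonempty set $E$ of $k$-element subsets of $V$; $d_i$ is the number of edges containing $i$. A cored vertex is a vertex of degree one; $G$ is cored if every edge contains a cored vertex. The Laplacian tensor $\mathcal L=\mathcal D-\mathcal A$ ($\mathcal D$ diagonal with entries $d_i$, $\mathcal A$ with entries $\frac1{(k-1)!}$ at index tuples forming an edge and $0$ otherwise) satisfies $(\mathcal L\mathbf x^{k-1})_i=d_ix_i^{k-1}-\sum_{e\in E,\,i\in e}\prod_{s\in e\setminus\{i\}}x_s$. A real $\lambda$ is an H-eigenvalue with H-eigenvector $\mathbf x\neq0$ if $(\mathcal L\mathbf x^{k-1})_i=\lambda x_i^{k-1}$ for all $i$. *)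

theory Defs
  imports Complex_Main
begin

definition uniform_hypergraph :: "nat \<Rightarrow> nat \<Rightarrow> nat set set \<Rightarrow> bool" where
  "uniform_hypergraph n k E \<longleftrightarrow> E \<noteq> {} \<and> (\<forall>e\<in>E. e \<subseteq> {1..n} \<and> card e = k)"

definition hdegree :: "nat set set \<Rightarrow> nat \<Rightarrow> nat" where
  "hdegree E i = card {e\<in>E. i \<in> e}"

definition cored_vertex :: "nat set set \<Rightarrow> nat \<Rightarrow> bool" where
  "cored_vertex E i \<longleftrightarrow> hdegree E i = 1"

definition cored :: "nat set set \<Rightarrow> bool" where
  "cored E \<longleftrightarrow> (\<forall>e\<in>E. \<exists>i\<in>e. cored_vertex E i)"

text \<open>(L x^{k-1})_i = d_i x_i^{k-1} - sum over edges e containing i of prod_{s in e - {i}} x_s\<close>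
definition laplacian_apply :: "nat set set \<Rightarrow> nat \<Rightarrow> (nat \<Rightarrow> real) \<Rightarrow> nat \<Rightarrow> real" where
  "laplacian_apply E k x i =
     real (hdegree E i) * x i ^ (k - 1) - (\<Sum>e\<in>{e\<in>E. i \<in> e}. \<Prod>s\<in>e - {i}. x s)"

definition H_eigenpair :: "nat \<Rightarrow> nat \<Rightarrow> nat set set \<Rightarrow> real \<Rightarrow> (nat \<Rightarrow> real) \<Rightarrow> bool" where
  "H_eigenpair n k E lam x \<longleftrightarrow>
     (\<forall>i. i \<notin> {1..n} \<longrightarrow> x i = 0) \<and> (\<exists>i\<in>{1..n}. x i \<noteq> 0) \<and>
     (\<forall>i\<in>{1..n}. laplacian_apply E k x i = lam * x i ^ (k - 1))"

end

theory Submission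
  imports Defs
begin

theorem lemma3p3:
  fixes n k :: nat and E :: "nat set set" and x :: "nat \<Rightarrow> real" and lam :: real
    and ic :: "nat set \<Rightarrow> nat"
  assumes "uniform_hypergraph n k E" and "k \<ge> 3" and "cored E"
    and "H_eigenpair n k E lam x" and "lam \<ge> 1"
    and "\<forall>e\<in>E. ic e \<in> e \<and> cored_vertex E (ic e)"
  shows "(even k \<longrightarrow> (\<forall>e\<in>E. (\<Prod>s\<in>e. x s) \<le> 0)) \<and>
         (odd k \<longrightarrow> (\<forall>e\<in>E. (\<Prod>s\<in>e - {ic e}. x s) \<le> 0))"
proof -
  have key: "(\<Prod>s\<in>e - {ic e}. x s) = (1 - lam) * x (ic e) ^ (k - 1)
      \<and> finite e \<and> ic e \<in> e" if eE: "e \<in> E" for e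
  proof -
    let ?i = "ic e"
    have ie: "?i \<in> e" and cv: "hdegree E ?i = 1" using assms(6) eE
      by (auto simp: cored_vertex_def)
    have sub: "e \<subseteq> {1..n}" and ck: "card e = k" using assms(1) eE
      by (auto simp: uniform_hypergraph_def)
    have fin: "finite e" using ck assms(2) card.infinite by fastforce
    have iin: "?i \<in> {1..n}" using sub ie by auto
    have "card {e'\<in>E. ?i \<in> e'} = 1" using cv by (simp add: hdegree_def)
    then obtain a where a: "{e'\<in>E. ?i \<in> e'} = {a}" using card_1_singletonE by blast
    have "e \<in> {e'\<in>E. ?i \<in> e'}" using eE ie by auto
    hence S: "{e'\<in>E. ?i \<in> e'} = {e}" using a by auto
    have "laplacian_apply E k x ?i = lam * x ?i ^ (k - 1)"
      using assms(4) iin by (auto simp: H_eigenpair_def)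
    hence "x ?i ^ (k - 1) - (\<Prod>s\<in>e - {?i}. x s) = lam * x ?i ^ (k - 1)"
      using cv S by (simp add: laplacian_apply_def)
    hence "(\<Prod>s\<in>e - {?i}. x s) = (1 - lam) * x ?i ^ (k - 1)" by (simp add: algebra_simps)
    thus ?thesis using fin ie by simp
  qed
  show ?thesis
  proof (intro conjI impI ballI)
    fix e assume ev: "even k" and eE: "e \<in> E"
    from key[OF eE] have P: "(\<Prod>s\<in>e - {ic e}. x s) = (1 - lam) * x (ic e) ^ (k - 1)"
      and fin: "finite e" and ie: "ic e \<in> e" by auto
    have "(\<Prod>s\<in>e. x s) = x (ic e) * (\<Prod>s\<in>e - {ic e}. x s)"
      using fin ie by (simp add: prod.remove)
    also have "\<dots> = (1 - lam) * (x (ic e) * x (ic e) ^ (k - 1))" using P by simp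
    also have "x (ic e) * x (ic e) ^ (k - 1) = x (ic e) ^ k"
      using assms(2) by (metis Suc_diff_le le_trans one_le_numeral diff_Suc_1 power_Suc)
    finally have "(\<Prod>s\<in>e. x s) = (1 - lam) * x (ic e) ^ k" .
    moreover have "x (ic e) ^ k \<ge> 0" using ev by (simp add: zero_le_even_power)
    ultimately show "(\<Prod>s\<in>e. x s) \<le> 0" using assms(5) by (simp add: mult_nonpos_nonneg)
  next
    fix e assume od: "odd k" and eE: "e \<in> E"
    from key[OF eE] have P: "(\<Prod>s\<in>e - {ic e}. x s) = (1 - lam) * x (ic e) ^ (k - 1)" by auto
    have "even (k - 1)" using od assms(2) by simp
    hence "x (ic e) ^ (k - 1) \<ge> 0" by (simp add: zero_le_even_power)
    thus "(\<Prod>s\<in>e - {ic e}. x s) \<le> 0" using P assms(5) by (simp add: mult_nonpos_nonneg)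
  qed
qed

end
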